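(* Let $F$ be the elementary cellular automaton with rule number 140. For every nonempty finite word $u\in\{0,1\}^*$, the deterministic communication complexity of $\textsc{SInv}_{F,u}$ restricted to inputs of length $n$ is bounded by a constant independent of $n$.
   Context: An elementary cellular automaton (ECA) with rule number $N\in\{0,\dots,255\}$ is the map $F:\{0,1\}^{\mathbb Z}\to\{0,1\}^{\mathbb Z}$ given by $F(x)_i=f(x_{i-1},x_i,x_{i+1})$. Here the local rule $f:\{0,1\}^3\to\{0,1\}$ is determined by $N=\sum_{a,b,c\in\{0,1\}}2^{4a+2b+c}f(a,b,c)$. For a nonempty finite word $u$, $p_u\in\{0,1\}^{\mathbb Z}$ is defined by $(p_u)_i=u_{i\bmod |u|}$. For a finite word $x$, $p_u[x]$ is the configuration equal to $x$ on positions $0,\dots,|x|-1$ and to $p_u$ elsewhere. $\textsc{SInv}_{F,u}$ is the decision problem: on input a finite word $x$, decide whether there is an integer $w$ such that for all $t\ge0$ the set of positions where $F^t(p_u)$ and $F^t(p_u[x])$ differ is contained in an interval of length $w$. For each $n$, it is regarded as a function $\{0,1\}^n\to\{0,1\}$. For a function $g:X\times Y\to Z$, $D(g)$ is the minimal depth of a deterministic two-party protocol computing $g$. In such a protocol, Alice knows $x$ and Bob knows $y$. The protocol is a binary tree: each internal node is labelled by a function of Alice's input only or of Bob's input only, with values in $\{\text{left},\text{right}\}$, and each leaf is labelled by an output value. For $g:\{0,1\}^m\to Z$, set $D(g)=\max_{0\le i<m}D(g_i)$, where $g_i:\{0,1\}^i\times\{0,1\}^{m-i}\to Z$ is $g_i(x,y)=g(xy)$.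 *)

theory Defs
  imports Main
begin

(* Configurations of {0,1}^Z, with 0/1 encoded as False/True. *)
type_synonym config = "int \<Rightarrow> bool"

definition eca_local :: "nat \<Rightarrow> bool \<Rightarrow> bool \<Rightarrow> bool \<Rightarrow> bool" where
  "eca_local N a b c = bit N (4 * of_bool a + 2 * of_bool b + of_bool c)"

definition eca :: "nat \<Rightarrow> config \<Rightarrow> config" where
  "eca N x = (\<lambda>i. eca_local N (x (i - 1)) (x i) (x (i + 1)))"

definition per :: "bool list \<Rightarrow> config" where
  "per u = (\<lambda>i. u ! nat (i mod int (length u)))"

definition patch :: "bool list \<Rightarrow> bool list \<Rightarrow> config" where
  "patch u x = (\<lambda>i. if 0 \<le> i \<and> i < int (length x) then x ! nat i else per u i)"

definition SInv :: "nat \<Rightarrow> bool list \<Rightarrow> bool list \<Rightarrow> bool" where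
  "SInv N u x = (\<exists>w::int. \<forall>t::nat. \<exists>a::int.
      {i. (eca N ^^ t) (per u) i \<noteq> (eca N ^^ t) (patch u x) i} \<subseteq> {a..a + w})"

datatype ('a, 'b, 'z) protocol =
    Leaf 'z
  | ANode "'a \<Rightarrow> bool" "('a, 'b, 'z) protocol" "('a, 'b, 'z) protocol"
  | BNode "'b \<Rightarrow> bool" "('a, 'b, 'z) protocol" "('a, 'b, 'z) protocol"

fun run :: "('a, 'b, 'z) protocol \<Rightarrow> 'a \<Rightarrow> 'b \<Rightarrow> 'z" where
  "run (Leaf z) x y = z"
| "run (ANode f l r) x y = (if f x then run l x y else run r x y)"
| "run (BNode f l r) x y = (if f y then run l x y else run r x y)"

fun depth :: "('a, 'b, 'z) protocol \<Rightarrow> nat" where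
  "depth (Leaf z) = 0"
| "depth (ANode f l r) = Suc (max (depth l) (depth r))"
| "depth (BNode f l r) = Suc (max (depth l) (depth r))"

definition CC :: "'a set \<Rightarrow> 'b set \<Rightarrow> ('a \<Rightarrow> 'b \<Rightarrow> 'z) \<Rightarrow> nat" where
  "CC X Y g = (LEAST d. \<exists>P :: ('a, 'b, 'z) protocol.
      depth P = d \<and> (\<forall>x\<in>X. \<forall>y\<in>Y. run P x y = g x y))"

definition words :: "nat \<Rightarrow> bool list set" where
  "words n = {x. length x = n}"

(* D(g) for g : {0,1}^m \<rightarrow> Z: max over splits i < m (convention 0 if m = 0) *)
definition CC_word :: "(bool list \<Rightarrow> 'z) \<Rightarrow> nat \<Rightarrow> nat" where
  "CC_word g m = Max (insert 0
      ((\<lambda>i. CC (words i) (words (m - i)) (\<lambda>x y. g (x @ y))) ` {..<m}))"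

end

theory Submission
  imports Defs
begin

lemma F140: "eca 140 y i = (y i \<and> (\<not> y (i-1) \<or> y (i+1)))"
  unfolding eca_def eca_local_def
  by (cases "y i"; cases "y (i-1)"; cases "y (i+1)"; simp add: bit_iff_odd)

lemma stepF: "(eca 140 ^^ Suc t) y i = ((eca 140 ^^ t) y i \<and> (\<not> (eca 140 ^^ t) y (i-1) \<or> (eca 140 ^^ t) y (i+1)))"
  by (simp only: funpow.simps comp_def F140)

lemma decr: "(eca 140 ^^ t) y i \<Longrightarrow> y i"
proof (induction t arbitrary: i)
  case 0 then show ?case by simp
next
  case (Suc t) then show ?case by (simp add: F140)
qed

lemma local_agree:
  assumes "\<forall>i. p \<le> i \<and> i \<le> q \<longrightarrow> y i = z i" "\<not> y p" "\<not> y q"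
  shows "\<forall>i. p \<le> i \<and> i \<le> q \<longrightarrow> (eca 140 ^^ t) y i = (eca 140 ^^ t) z i"
proof (induction t)
  case 0 then show ?case using assms by simp
next
  case (Suc t)
  show ?case
  proof (intro allI impI)
    fix i assume i: "p \<le> i \<and> i \<le> q"
    show "(eca 140 ^^ Suc t) y i = (eca 140 ^^ Suc t) z i"
    proof (cases "i = p \<or> i = q")
      case True
      then have "\<not> y i" "\<not> z i" using assms i by auto
      then show ?thesis using decr[of "Suc t" y] decr[of "Suc t" z] by blast
    next
      case False
      then have "p \<le> i - 1 \<and> i - 1 \<le> q" "p \<le> i + 1 \<and> i + 1 \<le> q" using i by auto
      then show ?thesis using Suc i by (simp only: stepF)
    qed
  qed
qed

lemma per_shift:
  assumes "u \<noteq> []" "0 \<le> k0" "k0 < int (length u)"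
  shows "per u (k0 + m * int (length u)) = u ! nat k0"
  unfolding per_def using assms by simp

lemma caseA:
  assumes "u \<noteq> []" "False \<in> set u"
  shows "SInv 140 u x"
proof -
  define L where "L = int (length u)"
  have L1: "L \<ge> 1" using assms(1) L_def by (cases u) auto
  obtain k where k: "k < length u" "u ! k = False" using assms(2) by (metis in_set_conv_nth)
  define k0 where "k0 = int k"
  have k0: "0 \<le> k0" "k0 < L" using k k0_def L_def by auto
  have F: "\<And>m. \<not> per u (k0 + m * L)" using per_shift[OF assms(1), of k0] k0 k k0_def L_def by simp
  define n where "n = int (length x)"
  define p where "p = k0 - L"
  define q where "q = k0 + (n + 1) * L"
  have pneg: "p < 0" using p_def k0 by simp
  have qn: "q \<ge> n"
  proof -
    have "(n+1) * L \<ge> (n+1) * 1" using L1 n_def by (intro mult_left_mono) auto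
    then show ?thesis using q_def k0 by simp
  qed
  have agree_out: "\<And>i. i < 0 \<or> i \<ge> n \<Longrightarrow> patch u x i = per u i"
    unfolding patch_def n_def by auto
  show ?thesis unfolding SInv_def
  proof (intro exI allI)
    fix t
    show "{i. (eca 140 ^^ t) (per u) i \<noteq> (eca 140 ^^ t) (patch u x) i} \<subseteq> {p..p + (q - p)}"
    proof
      fix i assume "i \<in> {i. (eca 140 ^^ t) (per u) i \<noteq> (eca 140 ^^ t) (patch u x) i}"
      then have d: "(eca 140 ^^ t) (per u) i \<noteq> (eca 140 ^^ t) (patch u x) i" by simp
      show "i \<in> {p..p + (q - p)}"
      proof (rule ccontr)
        assume "i \<notin> {p..p + (q - p)}"
        then have "i < p \<or> i > q" by auto
        then show False
        proof
          assume ip: "i < p"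
          define p' where "p' = k0 + (- 1 - (p - i)) * L"
          have "(p - i) * L \<ge> (p - i) * 1" using L1 ip by (intro mult_left_mono) auto
          then have p'i: "p' \<le> i" using p'_def p_def by (simp add: algebra_simps)
          have "\<forall>j. p' \<le> j \<and> j \<le> p \<longrightarrow> per u j = patch u x j"
            using agree_out pneg by auto
          moreover have "\<not> per u p'" using F p'_def by simp
          moreover have "\<not> per u p" using F[of "-1"] p_def by simp
          ultimately have "\<forall>j. p' \<le> j \<and> j \<le> p \<longrightarrow> (eca 140 ^^ t) (per u) j = (eca 140 ^^ t) (patch u x) j"
            by (rule local_agree)
          then show False using d p'i ip by auto
        next
          assume iq: "i > q"
          define q' where "q' = k0 + (n + 1 + (i - q)) * L"
          have "(i - q) * L \<ge> (i - q) * 1" using L1 iq by (intro mult_left_mono) auto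
          then have q'i: "q' \<ge> i" using q'_def q_def by (simp add: algebra_simps)
          have "\<forall>j. q \<le> j \<and> j \<le> q' \<longrightarrow> per u j = patch u x j"
            using agree_out qn by auto
          moreover have "\<not> per u q" using F q_def by simp
          moreover have "\<not> per u q'" using F q'_def by simp
          ultimately have "\<forall>j. q \<le> j \<and> j \<le> q' \<longrightarrow> (eca 140 ^^ t) (per u) j = (eca 140 ^^ t) (patch u x) j"
            by (rule local_agree)
          then show False using d q'i iq by auto
        qed
      qed
    qed
  qed
qed

lemma perB: assumes "u \<noteq> []" "False \<notin> set u" shows "per u = (\<lambda>_. True)"
proof
  fix i
  have "nat (i mod int (length u)) < length u" using assms(1)
    by (metis length_greater_0_conv nat_less_iff of_nat_0_less_iff pos_mod_bound pos_mod_sign)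
  then show "per u i = True" unfolding per_def using assms(2) by (metis nth_mem)
qed

lemma iter_true: "(eca 140 ^^ t) (\<lambda>_. True) = (\<lambda>_. True)"
  by (induction t) (auto simp: F140 fun_eq_iff)

lemma shrink:
  assumes "\<forall>i. i < k \<longrightarrow> y i" "\<not> y k"
  shows "\<forall>i. i \<le> k \<longrightarrow> (eca 140 ^^ t) y i = (i < k - int t)"
proof (induction t)
  case 0 then show ?case using assms by (auto simp: le_less)
next
  case (Suc t)
  show ?case
  proof (intro allI impI)
    fix i assume ik: "i \<le> k"
    show "(eca 140 ^^ Suc t) y i = (i < k - int (Suc t))"
    proof (cases "i = k")
      case True
      have "\<not> (eca 140 ^^ t) y k" using Suc by auto
      then show ?thesis using True by (simp only: stepF) auto
    next
      case False
      then have "i + 1 \<le> k" "i - 1 \<le> k" using ik by auto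
      then have "(eca 140 ^^ t) y i = (i < k - int t)" "(eca 140 ^^ t) y (i-1) = (i - 1 < k - int t)"
        "(eca 140 ^^ t) y (i+1) = (i + 1 < k - int t)" using Suc ik by auto
      then show ?thesis by (simp only: stepF) auto
    qed
  qed
qed

lemma caseB:
  assumes "u \<noteq> []" "False \<notin> set u"
  shows "SInv 140 u x = (False \<notin> set x)"
proof
  assume S: "SInv 140 u x"
  show "False \<notin> set x"
  proof
    assume "False \<in> set x"
    then obtain k where k: "k < length x" "x ! k = False" "\<forall>j<k. x ! j" 
    proof -
      assume H: "\<And>k. k < length x \<Longrightarrow> x ! k = False \<Longrightarrow> \<forall>j<k. x ! j \<Longrightarrow> thesis"
      have ex: "\<exists>k. k < length x \<and> x ! k = False" using \<open>False \<in> set x\<close> by (metis in_set_conv_nth)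
      define k where "k = (LEAST k. k < length x \<and> x ! k = False)"
      have "k < length x \<and> x ! k = False" unfolding k_def using LeastI_ex[OF ex] .
      moreover have "\<forall>j<k. x ! j"
      proof (intro allI impI)
        fix j assume "j < k"
        then have "\<not> (j < length x \<and> x ! j = False)" using not_less_Least k_def by blast
        then show "x ! j" using \<open>j < k\<close> calculation by auto
      qed
      ultimately show thesis using H by blast
    qed
    define y where "y = patch u x"
    have P: "per u = (\<lambda>_. True)" using perB[OF assms] .
    have y1: "\<forall>i. i < int k \<longrightarrow> y i"
    proof (intro allI impI)
      fix i assume "i < int k"
      then show "y i" unfolding y_def patch_def using P k(1) k(3)
        by (auto simp: nat_less_iff)
    qed
    have y2: "\<not> y (int k)" unfolding y_def patch_def using k by simp
    note sh = shrink[OF y1 y2]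
    from S obtain w where w: "\<forall>t::nat. \<exists>a. {i. (eca 140 ^^ t) (per u) i \<noteq> (eca 140 ^^ t) y i} \<subseteq> {a..a + w}"
      unfolding SInv_def y_def by blast
    define t where "t = nat (int k + \<bar>w\<bar> + 2)"
    obtain a where a: "{i. (eca 140 ^^ t) (per u) i \<noteq> (eca 140 ^^ t) y i} \<subseteq> {a..a + w}" using w by blast
    have tk: "int t = int k + \<bar>w\<bar> + 2" using t_def by simp
    have e1: "(eca 140 ^^ t) y (-1) = (-1 < int k - int t)" using sh by simp
    have e2: "(eca 140 ^^ t) y (int k - int t) = (int k - int t < int k - int t)" using sh by simp
    have pt: "\<And>i. (eca 140 ^^ t) (per u) i" using P iter_true by simp
    have m1: "-1 \<in> {i. (eca 140 ^^ t) (per u) i \<noteq> (eca 140 ^^ t) y i}"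
      using e1 pt tk by simp
    have m2: "int k - int t \<in> {i. (eca 140 ^^ t) (per u) i \<noteq> (eca 140 ^^ t) y i}"
      using e2 pt by simp
    have "-1 \<in> {a..a+w}" "int k - int t \<in> {a..a+w}" using a m1 m2 by blast+
    then show False using tk by auto
  qed
next
  assume nx: "False \<notin> set x"
  have P: "per u = (\<lambda>_. True)" using perB[OF assms] .
  have "patch u x = (\<lambda>_. True)"
  proof
    fix i
    show "patch u x i = True" unfolding patch_def using P nx
      by (auto simp: nat_less_iff) (metis nth_mem nat_less_iff)
  qed
  then show "SInv 140 u x" unfolding SInv_def using P by (intro exI[of _ 0]) auto
qed

lemma CC_le:
  assumes "\<forall>x\<in>X. \<forall>y\<in>Y. run P x y = g x y"
  shows "CC X Y g \<le> depth P"
  unfolding CC_def by (rule Least_le) (use assms in blast)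

lemma CC_word_le:
  assumes "\<And>i. i < m \<Longrightarrow> CC (words i) (words (m - i)) (\<lambda>x y. g (x @ y)) \<le> C"
  shows "CC_word g m \<le> C"
  unfolding CC_word_def using assms by (subst Max_le_iff) auto

theorem mainTheorem8:
  shows "\<forall>u::bool list. u \<noteq> [] \<longrightarrow> (\<exists>C::nat. \<forall>n. CC_word (SInv 140 u) n \<le> C)"
proof (intro allI impI)
  fix u :: "bool list" assume u: "u \<noteq> []"
  show "\<exists>C::nat. \<forall>n. CC_word (SInv 140 u) n \<le> C"
  proof (cases "False \<in> set u")
    case True
    show ?thesis
    proof (intro exI allI)
      fix n
      show "CC_word (SInv 140 u) n \<le> 0"
      proof (rule CC_word_le)
        fix i
        have "CC (words i) (words (n - i)) (\<lambda>x y. SInv 140 u (x @ y)) \<le> depth (Leaf True :: (bool list, bool list, bool) protocol)"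
          by (rule CC_le) (simp add: caseA[OF u True])
        then show "CC (words i) (words (n - i)) (\<lambda>x y. SInv 140 u (x @ y)) \<le> 0" by simp
      qed
    qed
  next
    case False
    show ?thesis
    proof (intro exI allI)
      fix n
      show "CC_word (SInv 140 u) n \<le> 2"
      proof (rule CC_word_le)
        fix i
        let ?P = "ANode (\<lambda>x. False \<notin> set x) (BNode (\<lambda>y. False \<notin> set y) (Leaf True) (Leaf False)) (Leaf False)
           :: (bool list, bool list, bool) protocol"
        have "CC (words i) (words (n - i)) (\<lambda>x y. SInv 140 u (x @ y)) \<le> depth ?P"
          by (rule CC_le) (simp add: caseB[OF u False])
        then show "CC (words i) (words (n - i)) (\<lambda>x y. SInv 140 u (x @ y)) \<le> 2"
          by (simp add: numeral_2_eq_2)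
      qed
    qed
  qed
qed

end
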